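(* Assume the setting and Assumption $( * )$ described in the context. Let $(y_0,w_0)\in\mathscr{D}\times\mathbb{R}^n$ and let $\{(y_\alpha,w_\alpha)\}_{\alpha\in A}$ be a family (with arbitrary index set $A$) of solutions of the integrated Maxey–Riley system with initial condition $(y_0,w_0)$, where $(y_\alpha,w_\alpha)$ has domain $[t_0,T_\alpha)$. Let $T$ be such that $[t_0,T)=\bigcup_{\alpha\in A}[t_0,T_\alpha)$ and define $(y(t),w(t))=(y_\alpha(t),w_\alpha(t))$ whenever $t\in[t_0,T_\alpha)$. Then $(y,w)$ is well defined and is a solution of the integrated Maxey–Riley system on $[t_0,T)$ with initial condition $(y_0,w_0)$.
   Context: Fix $n\ge 1$, a domain $\mathscr{D}\subseteq\mathbb{R}^n$, an initial time $t_0\ge 0$, a velocity field $u:\mathscr{D}\times[0,\infty)\to\mathbb{R}^n$, real constants $R,\mu,\kappa,\gamma>0$ and a constant vector $g\in\mathbb{R}^n$. Write $\frac{D}{Dt}=\partial_t+(u\cdot\nabla)$ and define $A_u,B_u:\mathscr{D}\times[t_0,\infty)\to\mathbb{R}^n$, $M_u:\mathscr{D}\times[t_0,\infty)\to\mathbb{R}^{n\times n}$ by $A_u=u+\frac{\gamma}{6}\mu^{-1}\Delta u$, $M_u=\nabla u+\frac{\gamma}{6}\mu^{-1}\nabla\Delta u$, $B_u=\left(\frac{3R}{2}-1\right)\left(\frac{Du}{Dt}-g\right)+\left(\frac{R}{20}-\frac16\right)\gamma\mu^{-1}\frac{D}{Dt}\Delta u-\frac{\gamma}{6}\mu^{-1}\left(\nabla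 u+\frac{\gamma}{6}\mu^{-1}\nabla\Delta u\right)\Delta u$. The integrated Maxey–Riley system is $y(t)=y_0+\int_{t_0}^t\big(w(s)+A_u(y(s),s)\big)\,ds$, $w(t)=w_0+\int_{t_0}^t\Big(-\mu w(s)-M_u(y(s),s)w(s)-\kappa\mu^{1/2}\frac{w(s)}{\sqrt{t-s}}+B_u(y(s),s)\Big)\,ds$. For $T\in(t_0,\infty]$, a solution with domain $[t_0,T)$ and initial condition $(y_0,w_0)$ is a pair of continuous maps $y:[t_0,T)\to\mathscr{D}$, $w:[t_0,T)\to\mathbb{R}^n$ satisfying both equations for every $t\in[t_0,T)$. Assumption $( * )$: $u$ is smooth enough that the first-order partial derivatives in time and space of $A_u$ and $B_u$ exist, are continuous, and are uniformly bounded in time and space, i.e. there is $L_b$ with $\|\partial_tA_u\|_\infty,\|\nabla A_u\|_\infty,\|\partial_tB_u\|_\infty,\|\nabla B_u\|_\infty<L_b$. *)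

theory Defs
  imports "HOL-Analysis.Analysis"
begin


text \<open>Partial derivative of a space-time field f :: R^n x [0,oo) -> R^n.
  Direction None = time (one-sided at t = 0, the field lives on [0,oo)),
  direction Some i = i-th spatial coordinate direction.\<close>
definition pd :: "'n option \<Rightarrow> (real^'n::finite \<Rightarrow> real \<Rightarrow> real^'n) \<Rightarrow> (real^'n::finite \<Rightarrow> real \<Rightarrow> real^'n)" where
  "pd d f x t = (case d of
      None \<Rightarrow> vector_derivative (\<lambda>s. f x s) (at t within {0..})
    | Some i \<Rightarrow> vector_derivative (\<lambda>h. f (x + h *\<^sub>R axis i 1) t) (at 0))"

definition has_pd :: "'n option \<Rightarrow> (real^'n::finite \<Rightarrow> real \<Rightarrow> real^'n) \<Rightarrow> real^'n \<Rightarrow> real \<Rightarrow> bool" where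
  "has_pd d f x t = (case d of
      None \<Rightarrow> (\<lambda>s. f x s) differentiable (at t within {0..})
    | Some i \<Rightarrow> (\<lambda>h. f (x + h *\<^sub>R axis i 1) t) differentiable (at 0))"

fun ipd :: "'n option list \<Rightarrow> (real^'n::finite \<Rightarrow> real \<Rightarrow> real^'n) \<Rightarrow> (real^'n::finite \<Rightarrow> real \<Rightarrow> real^'n)" where
  "ipd [] f = f"
| "ipd (d # ds) f = pd d (ipd ds f)"

definition Ck_on :: "nat \<Rightarrow> ((real^'n) \<times> real) set \<Rightarrow> (real^'n::finite \<Rightarrow> real \<Rightarrow> real^'n) \<Rightarrow> bool" where
  "Ck_on k S f = (\<forall>ds. length ds \<le> k \<longrightarrow>
      continuous_on S (\<lambda>(x,t). ipd ds f x t) \<and>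
      (length ds < k \<longrightarrow> (\<forall>d. \<forall>(x,t)\<in>S. has_pd d (ipd ds f) x t)))"

definition jac :: "(real^'n::finite \<Rightarrow> real \<Rightarrow> real^'n) \<Rightarrow> real^'n \<Rightarrow> real \<Rightarrow> real^'n \<Rightarrow> real^'n" where
  "jac f x t v = (\<Sum>k\<in>UNIV. (v $ k) *\<^sub>R pd (Some k) f x t)"

definition lap :: "(real^'n::finite \<Rightarrow> real \<Rightarrow> real^'n) \<Rightarrow> (real^'n::finite \<Rightarrow> real \<Rightarrow> real^'n)" where
  "lap f x t = (\<Sum>i\<in>UNIV. pd (Some i) (pd (Some i) f) x t)"

definition matd :: "(real^'n::finite \<Rightarrow> real \<Rightarrow> real^'n) \<Rightarrow> (real^'n::finite \<Rightarrow> real \<Rightarrow> real^'n) \<Rightarrow> (real^'n::finite \<Rightarrow> real \<Rightarrow> real^'n)" where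
  "matd u f x t = pd None f x t + jac f x t (u x t)"

definition A_u :: "(real^'n::finite \<Rightarrow> real \<Rightarrow> real^'n) \<Rightarrow> real \<Rightarrow> real \<Rightarrow> (real^'n::finite \<Rightarrow> real \<Rightarrow> real^'n)" where
  "A_u u \<mu> \<gamma> x t = u x t + (\<gamma> / 6 / \<mu>) *\<^sub>R lap u x t"

definition M_u :: "(real^'n::finite \<Rightarrow> real \<Rightarrow> real^'n) \<Rightarrow> real \<Rightarrow> real \<Rightarrow> real^'n \<Rightarrow> real \<Rightarrow> real^'n \<Rightarrow> real^'n" where
  "M_u u \<mu> \<gamma> x t v = jac u x t v + (\<gamma> / 6 / \<mu>) *\<^sub>R jac (lap u) x t v"

definition B_u :: "(real^'n::finite \<Rightarrow> real \<Rightarrow> real^'n) \<Rightarrow> real \<Rightarrow> real \<Rightarrow> real \<Rightarrow> real^'n \<Rightarrow> (real^'n::finite \<Rightarrow> real \<Rightarrow> real^'n)" where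
  "B_u u R \<mu> \<gamma> g x t =
     (3 * R / 2 - 1) *\<^sub>R (matd u u x t - g)
   + ((R / 20 - 1 / 6) * \<gamma> / \<mu>) *\<^sub>R matd u (lap u) x t
   - (\<gamma> / 6 / \<mu>) *\<^sub>R M_u u \<mu> \<gamma> x t (lap u x t)"

definition MR_solution ::
  "(real^'n::finite \<Rightarrow> real \<Rightarrow> real^'n) \<Rightarrow> real \<Rightarrow> real \<Rightarrow> real \<Rightarrow> real \<Rightarrow> real^'n \<Rightarrow> (real^'n) set \<Rightarrow> real \<Rightarrow> ereal
    \<Rightarrow> real^'n \<Rightarrow> real^'n \<Rightarrow> (real \<Rightarrow> real^'n) \<Rightarrow> (real \<Rightarrow> real^'n) \<Rightarrow> bool" where
  "MR_solution u R \<mu> \<kappa> \<gamma> g D t0 T y0 w0 y w \<longleftrightarrow>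
     ereal t0 < T \<and>
     continuous_on {t. t0 \<le> t \<and> ereal t < T} y \<and>
     continuous_on {t. t0 \<le> t \<and> ereal t < T} w \<and>
     (\<forall>t. t0 \<le> t \<and> ereal t < T \<longrightarrow>
        y t \<in> D \<and>
        ((\<lambda>s. w s + A_u u \<mu> \<gamma> (y s) s) has_integral (y t - y0)) {t0..t} \<and>
        ((\<lambda>s. - \<mu> *\<^sub>R w s - M_u u \<mu> \<gamma> (y s) s (w s)
               - (\<kappa> * sqrt \<mu> / sqrt (t - s)) *\<^sub>R w s + B_u u R \<mu> \<gamma> g (y s) s)
           has_integral (w t - w0)) {t0..t})"

end

theory Submission
  imports Defs
begin

lemma mvt1:
  fixes \<phi> :: "real \<Rightarrow> 'b::real_normed_vector"
  assumes der: "\<And>h. h \<in> closed_segment 0 d \<Longrightarrow> (\<phi> has_vector_derivative \<phi>' h) (at h)"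
    and bd: "\<And>h. h \<in> closed_segment 0 d \<Longrightarrow> norm (\<phi>' h) \<le> M"
  shows "norm (\<phi> d - \<phi> 0) \<le> M * \<bar>d\<bar>"
proof -
  have "norm (\<phi> d - \<phi> 0) \<le> M * norm (d - 0)"
  proof (rule differentiable_bound[where f'="\<lambda>h x. x *\<^sub>R \<phi>' h"])
    show "convex (closed_segment 0 d)" by simp
    fix h assume h: "h \<in> closed_segment 0 d"
    show "(\<phi> has_derivative (\<lambda>x. x *\<^sub>R \<phi>' h)) (at h within closed_segment 0 d)"
      using der[OF h] by (simp add: has_vector_derivative_def has_derivative_at_withinI)
    show "onorm (\<lambda>x. x *\<^sub>R \<phi>' h) \<le> M"
      proof (rule onorm_bound)
      show "0 \<le> M" using bd[OF h] norm_ge_zero order_trans by blast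
      show "norm (x *\<^sub>R \<phi>' h) \<le> M * norm x" for x
        using mult_right_mono[OF bd[OF h], of "\<bar>x\<bar>"] by (simp add: mult.commute)
    qed
  qed auto
  then show ?thesis by simp
qed

lemma stair:
  fixes g :: "real^'n \<Rightarrow> real^'n"
  assumes hd: "\<And>z j. z \<in> cball p R0 \<Longrightarrow> (\<lambda>h. g (z + h *\<^sub>R axis j 1)) differentiable (at 0)"
    and bd: "\<And>z j. z \<in> cball p R0 \<Longrightarrow> norm (vector_derivative (\<lambda>h. g (z + h *\<^sub>R axis j 1)) (at 0)) \<le> M"
    and x: "x \<in> cball p r" and x': "x' \<in> cball p r" and r: "real CARD('n) * r \<le> R0"
  shows "norm (g x' - g x) \<le> M * (\<Sum>i\<in>UNIV. \<bar>x'$i - x$i\<bar>)"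
proof -
  define z where "z S = (\<chi> i. if i \<in> S then x'$i else x$i)" for S
  have xi: "\<bar>p$i - x$i\<bar> \<le> r" for i
    using x component_le_norm_cart[of "p - x" i] by (simp add: dist_norm)
  have xi': "\<bar>p$i - x'$i\<bar> \<le> r" for i
    using x' component_le_norm_cart[of "p - x'" i] by (simp add: dist_norm)
  have "norm (g (z S) - g x) \<le> M * (\<Sum>i\<in>S. \<bar>x'$i - x$i\<bar>)" if "finite S" for S
    using that
  proof (induction S rule: finite_induct)
    case empty
    have "z {} = x" by (simp add: z_def vec_eq_iff)
    then show ?case by simp
  next
    case (insert k S)
    define d where "d = x'$k - x$k"
    define \<phi> where "\<phi> h = g (z S + h *\<^sub>R axis k 1)" for h
    have zk: "z (insert k S) = z S + d *\<^sub>R axis k 1"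
      using insert(2) by (auto simp: z_def vec_eq_iff d_def axis_def)
    have mem: "z S + h *\<^sub>R axis k 1 \<in> cball p R0" if h: "h \<in> closed_segment 0 d" for h
    proof -
      have ci: "\<bar>p$i - (z S + h *\<^sub>R axis k 1)$i\<bar> \<le> r" for i
      proof (cases "i = k")
        case True
        then have "(z S + h *\<^sub>R axis k 1)$i = x$k + h" using insert(2) by (simp add: z_def axis_def)
        moreover have "(0 \<le> h \<and> h \<le> d) \<or> (d \<le> h \<and> h \<le> 0)"
          using h by (auto simp: closed_segment_eq_real_ivl split: if_splits)
        ultimately show ?thesis using xi[of k] xi'[of k] True unfolding d_def by auto
      next
        case False
        then have "(z S + h *\<^sub>R axis k 1)$i = (if i \<in> S then x'$i else x$i)"
          by (simp add: z_def axis_def)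
        then show ?thesis using xi[of i] xi'[of i] by auto
      qed
      have "dist p (z S + h *\<^sub>R axis k 1) \<le> (\<Sum>i\<in>UNIV. \<bar>(p - (z S + h *\<^sub>R axis k 1))$i\<bar>)"
        unfolding dist_norm by (rule norm_le_l1_cart)
      also have "\<dots> \<le> (\<Sum>i\<in>(UNIV::'n set). r)"
        by (rule sum_mono) (use ci in simp)
      also have "\<dots> = real CARD('n) * r" by simp
      finally show ?thesis using r by simp
    qed
    have "norm (\<phi> d - \<phi> 0) \<le> M * \<bar>d\<bar>"
    proof (rule mvt1)
      fix h assume h: "h \<in> closed_segment 0 d"
      let ?q = "z S + h *\<^sub>R axis k 1"
      let ?V = "vector_derivative (\<lambda>h'. g (?q + h' *\<^sub>R axis k 1)) (at 0)"
      have "((\<lambda>h'. g (?q + h' *\<^sub>R axis k 1)) has_vector_derivative ?V) (at 0)"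
        using hd[OF mem[OF h]] by (simp add: vector_derivative_works)
      then have "((\<lambda>h'. g (?q + h' *\<^sub>R axis k 1)) has_vector_derivative ?V) (at ((\<lambda>s. s - h) h))"
        by simp
      have d1: "((\<lambda>s. s - h) has_vector_derivative 1) (at h)"
        by (simp add: has_vector_derivative_diff_const)
      have "(((\<lambda>h'. g (?q + h' *\<^sub>R axis k 1)) \<circ> (\<lambda>s. s - h)) has_vector_derivative 1 *\<^sub>R ?V) (at h)"
        by (rule vector_diff_chain_at[OF d1]) (use \<open>((\<lambda>h'. g (?q + h' *\<^sub>R axis k 1)) has_vector_derivative ?V) (at ((\<lambda>s. s - h) h))\<close> in simp)
      then have "(((\<lambda>h'. g (?q + h' *\<^sub>R axis k 1)) \<circ> (\<lambda>s. s - h)) has_vector_derivative ?V) (at h)"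
        by simp
      moreover have "((\<lambda>h'. g (?q + h' *\<^sub>R axis k 1)) \<circ> (\<lambda>s. s - h)) = \<phi>"
        by (rule ext) (simp add: \<phi>_def algebra_simps flip: scaleR_add_left)
      ultimately show "(\<phi> has_vector_derivative ?V) (at h)" by simp
      show "norm ?V \<le> M" using bd[OF mem[OF h]] .
    qed
    then have "norm (g (z (insert k S)) - g (z S)) \<le> M * \<bar>x'$k - x$k\<bar>"
      by (simp add: \<phi>_def zk d_def)
    then have "norm (g (z (insert k S)) - g x) \<le> M * \<bar>x'$k - x$k\<bar> + M * (\<Sum>i\<in>S. \<bar>x'$i - x$i\<bar>)"
      using insert(3) norm_triangle_ineq[of "g (z (insert k S)) - g (z S)" "g (z S) - g x"] by simp
    then show ?case using insert(1,2) by (simp add: algebra_simps)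
  qed
  moreover have "z UNIV = x'" by (simp add: z_def vec_eq_iff)
  ultimately show ?thesis by (metis finite)
qed

lemma lip_pd:
  fixes f :: "real^'n \<Rightarrow> real \<Rightarrow> real^'n"
  assumes h: "\<forall>x\<in>cball p R0. \<forall>t\<in>S. \<forall>j. has_pd (Some j) f x t \<and> norm (pd (Some j) f x t) \<le> M"
    and x: "x \<in> cball p r" and x': "x' \<in> cball p r" and r: "real CARD('n) * r \<le> R0" and t: "t \<in> S"
  shows "norm (f x' t - f x t) \<le> (real CARD('n) * M) * norm (x' - x)"
proof -
  have "r \<ge> 0" using x by (auto simp: dist_norm intro: order_trans[OF norm_ge_zero])
  then have "R0 \<ge> 0" using r by (metis of_nat_0_le_iff mult_nonneg_nonneg order_trans)
  then have "p \<in> cball p R0" by simp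
  then have M0: "M \<ge> 0" using h t by (meson norm_ge_zero order_trans)
  have "norm ((\<lambda>x. f x t) x' - (\<lambda>x. f x t) x) \<le> M * (\<Sum>i\<in>UNIV. \<bar>x'$i - x$i\<bar>)"
  proof (rule stair[OF _ _ x x' r])
    fix z j assume z: "z \<in> cball p R0"
    show "(\<lambda>h. f (z + h *\<^sub>R axis j 1) t) differentiable (at 0)"
      using h z t by (auto simp: has_pd_def)
    show "norm (vector_derivative (\<lambda>h. f (z + h *\<^sub>R axis j 1) t) (at 0)) \<le> M"
      using h z t by (auto simp: pd_def)
  qed
  also have "\<dots> \<le> M * (\<Sum>i\<in>(UNIV::'n set). norm (x' - x))"
    by (rule mult_left_mono[OF sum_mono M0]) (metis component_le_norm_cart vector_minus_component)
  also have "\<dots> = (real CARD('n) * M) * norm (x' - x)" by simp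
  finally show ?thesis by simp
qed

lemma bound_compact:
  fixes h :: "'a::metric_space \<Rightarrow> 'b::real_normed_vector"
  assumes "compact K" "continuous_on K h"
  shows "\<exists>B. \<forall>z\<in>K. norm (h z) \<le> B"
proof -
  have "bounded (h ` K)" using assms compact_continuous_image compact_imp_bounded by blast
  then show ?thesis by (auto simp: bounded_iff)
qed

lemma lip_cont:
  fixes f :: "real^'n \<Rightarrow> real \<Rightarrow> real^'n"
  assumes h: "\<forall>x\<in>cball p R0. \<forall>t\<in>S. \<forall>j. has_pd (Some j) f x t"
    and c: "\<forall>j. continuous_on (cball p R0 \<times> S) (\<lambda>(x,t). pd (Some j) f x t)"
    and S: "compact S" and r: "real CARD('n) * r \<le> R0"
  shows "\<exists>L. \<forall>x\<in>cball p r. \<forall>x'\<in>cball p r. \<forall>t\<in>S. norm (f x' t - f x t) \<le> L * norm (x' - x)"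
proof -
  have "\<forall>j. \<exists>B. \<forall>z\<in>cball p R0 \<times> S. norm ((\<lambda>(x,t). pd (Some j) f x t) z) \<le> B"
    using bound_compact[OF compact_Times[OF compact_cball S]] c by blast
  then obtain B where B: "\<And>j z. z \<in> cball p R0 \<times> S \<Longrightarrow> norm ((\<lambda>(x,t). pd (Some j) f x t) z) \<le> B j"
    by metis
  define M where "M = (\<Sum>j\<in>UNIV. \<bar>B j\<bar>)"
  have "B j \<le> M" for j
    unfolding M_def by (rule order_trans[OF abs_ge_self[of "B j"] member_le_sum[of j UNIV "\<lambda>j. \<bar>B j\<bar>"]]) auto
  then have "\<forall>x\<in>cball p R0. \<forall>t\<in>S. \<forall>j. has_pd (Some j) f x t \<and> norm (pd (Some j) f x t) \<le> M"
    using h B by (fastforce intro: order_trans)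
  then show ?thesis using lip_pd[OF _ _ _ r] by blast
qed

lemma Ck_cont: "Ck_on k S u \<Longrightarrow> length ds \<le> k \<Longrightarrow> continuous_on S (\<lambda>(x,t). ipd ds u x t)"
  by (simp add: Ck_on_def)

lemma Ck_pd: "Ck_on k S u \<Longrightarrow> length ds < k \<Longrightarrow> (x,t) \<in> S \<Longrightarrow> has_pd d (ipd ds u) x t"
proof -
  assume a: "Ck_on k S u" "length ds < k" "(x,t) \<in> S"
  then have "\<forall>d. \<forall>(x,t)\<in>S. has_pd d (ipd ds u) x t" unfolding Ck_on_def by auto
  then show ?thesis using a(3) by auto
qed

lemma pd_lap:
  assumes "\<And>i. has_pd (Some k) (ipd [Some i, Some i] u) x t"
  shows "pd (Some k) (lap u) x t = (\<Sum>i\<in>UNIV. ipd [Some k, Some i, Some i] u x t)"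
proof -
  have "((\<lambda>h. \<Sum>i\<in>UNIV. pd (Some i) (pd (Some i) u) (x + h *\<^sub>R axis k 1) t) has_vector_derivative
      (\<Sum>i\<in>UNIV. vector_derivative (\<lambda>h. pd (Some i) (pd (Some i) u) (x + h *\<^sub>R axis k 1) t) (at 0))) (at 0)"
    by (rule has_vector_derivative_sum) (use assms in \<open>auto simp: has_pd_def vector_derivative_works\<close>)
  then show ?thesis
    by (simp add: pd_def lap_def vector_derivative_at)
qed

lemma sum_bound_lemma:
  fixes v :: "real^'n" and F :: "'n \<Rightarrow> real^'n"
  assumes "\<And>k. norm (F k) \<le> C" "C \<ge> 0"
  shows "norm (\<Sum>k\<in>UNIV. v$k *\<^sub>R F k) \<le> real CARD('n) * C * norm v"
proof -
  have "norm (\<Sum>k\<in>UNIV. v$k *\<^sub>R F k) \<le> (\<Sum>k\<in>UNIV. norm (v$k *\<^sub>R F k))" by (rule norm_sum)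
  also have "\<dots> \<le> (\<Sum>k\<in>(UNIV::'n set). norm v * C)"
  proof (rule sum_mono)
    fix k
    show "norm (v$k *\<^sub>R F k) \<le> norm v * C"
      using mult_mono[OF component_le_norm_cart[of v k] assms(1)[of k]] assms(2) by simp
  qed
  also have "\<dots> = real CARD('n) * C * norm v" by simp
  finally show ?thesis .
qed

lemma local_est:
  fixes u :: "real^'n \<Rightarrow> real \<Rightarrow> real^'n"
  assumes D: "open D" and t0: "t0 \<ge> 0"
    and u_smooth: "Ck_on 4 (D \<times> {0..}) u"
    and star: "\<exists>Lb. \<forall>x\<in>D. \<forall>t\<ge>t0. \<forall>d.
        has_pd d (A_u u \<mu> \<gamma>) x t \<and> has_pd d (B_u u R \<mu> \<gamma> g) x t \<and>
        norm (pd d (A_u u \<mu> \<gamma>) x t) < Lb \<and> norm (pd d (B_u u R \<mu> \<gamma> g) x t) < Lb"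
    and p: "p \<in> D"
  shows "\<exists>r>0. \<exists>LA LB CM LM. \<forall>x\<in>cball p r. \<forall>x'\<in>cball p r. \<forall>s\<in>{t0..\<tau>}. \<forall>v v'.
     norm (A_u u \<mu> \<gamma> x s - A_u u \<mu> \<gamma> x' s) \<le> LA * norm (x - x') \<and>
     norm (B_u u R \<mu> \<gamma> g x s - B_u u R \<mu> \<gamma> g x' s) \<le> LB * norm (x - x') \<and>
     norm (M_u u \<mu> \<gamma> x s v - M_u u \<mu> \<gamma> x s v') \<le> CM * norm (v - v') \<and>
     norm (M_u u \<mu> \<gamma> x s v - M_u u \<mu> \<gamma> x' s v) \<le> LM * norm (x - x') * norm v"
proof -
  obtain R0 where R0: "R0 > 0" "cball p R0 \<subseteq> D" using D p open_contains_cball by blast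
  define r where "r = R0 / real CARD('n)"
  have r0: "r > 0" using R0 by (simp add: r_def)
  have rR: "real CARD('n) * r \<le> R0" by (simp add: r_def)
  define S where "S = {t0..\<tau>}"
  have S0: "\<And>s. s \<in> S \<Longrightarrow> s \<ge> 0" using t0 by (auto simp: S_def)
  have cS: "compact S" by (simp add: S_def)
  obtain Lb where Lb: "\<forall>x\<in>D. \<forall>t\<ge>t0. \<forall>d.
        has_pd d (A_u u \<mu> \<gamma>) x t \<and> has_pd d (B_u u R \<mu> \<gamma> g) x t \<and>
        norm (pd d (A_u u \<mu> \<gamma>) x t) < Lb \<and> norm (pd d (B_u u R \<mu> \<gamma> g) x t) < Lb"
    using star by blast
  have hA: "\<forall>x\<in>cball p R0. \<forall>t\<in>S. \<forall>j. has_pd (Some j) (A_u u \<mu> \<gamma>) x t \<and> norm (pd (Some j) (A_u u \<mu> \<gamma>) x t) \<le> Lb"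
  proof (intro ballI allI)
    fix x t j assume "x \<in> cball p R0" "t \<in> S"
    then have "x \<in> D" "t \<ge> t0" using R0(2) by (auto simp: S_def)
    then show "has_pd (Some j) (A_u u \<mu> \<gamma>) x t \<and> norm (pd (Some j) (A_u u \<mu> \<gamma>) x t) \<le> Lb"
      using Lb by (meson less_imp_le)
  qed
  have hB: "\<forall>x\<in>cball p R0. \<forall>t\<in>S. \<forall>j. has_pd (Some j) (B_u u R \<mu> \<gamma> g) x t \<and> norm (pd (Some j) (B_u u R \<mu> \<gamma> g) x t) \<le> Lb"
  proof (intro ballI allI)
    fix x t j assume "x \<in> cball p R0" "t \<in> S"
    then have "x \<in> D" "t \<ge> t0" using R0(2) by (auto simp: S_def)
    then show "has_pd (Some j) (B_u u R \<mu> \<gamma> g) x t \<and> norm (pd (Some j) (B_u u R \<mu> \<gamma> g) x t) \<le> Lb"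
      using Lb by (meson less_imp_le)
  qed
  have lipu: "\<exists>L. \<forall>x\<in>cball p r. \<forall>x'\<in>cball p r. \<forall>t\<in>S. norm (ipd ds u x' t - ipd ds u x t) \<le> L * norm (x' - x)"
    if "length ds \<le> 3" for ds
  proof (rule lip_cont[OF _ _ cS rR])
    show "\<forall>x\<in>cball p R0. \<forall>t\<in>S. \<forall>j. has_pd (Some j) (ipd ds u) x t"
    proof (intro ballI allI)
      fix x t j assume "x \<in> cball p R0" "t \<in> S"
      then have "(x,t) \<in> D \<times> {0..}" using R0(2) S0 by auto
      then show "has_pd (Some j) (ipd ds u) x t" using Ck_pd[OF u_smooth] that by simp
    qed
    show "\<forall>j. continuous_on (cball p R0 \<times> S) (\<lambda>(x,t). pd (Some j) (ipd ds u) x t)"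
    proof
      fix j
      have "continuous_on (D \<times> {0..}) (\<lambda>(x,t). ipd (Some j # ds) u x t)"
        by (rule Ck_cont[OF u_smooth]) (use that in simp)
      moreover have "cball p R0 \<times> S \<subseteq> D \<times> {0..}" using R0(2) S0 by auto
      ultimately show "continuous_on (cball p R0 \<times> S) (\<lambda>(x,t). pd (Some j) (ipd ds u) x t)"
        by (simp add: continuous_on_subset)
    qed
  qed
  have contu: "continuous_on (cball p R0 \<times> S) (\<lambda>(x,t). ipd ds u x t)" if "length ds \<le> 4" for ds
  proof -
    have "cball p R0 \<times> S \<subseteq> D \<times> {0..}" using R0(2) S0 by auto
    then show ?thesis using Ck_cont[OF u_smooth that] continuous_on_subset by blast
  qed
  define c where "c = \<gamma> / 6 / \<mu>"
  define col where "col k x t = ipd [Some k] u x t + c *\<^sub>R (\<Sum>i\<in>UNIV. ipd [Some k, Some i, Some i] u x t)" for k x t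
  have Mcol: "M_u u \<mu> \<gamma> x t v = (\<Sum>k\<in>UNIV. v$k *\<^sub>R col k x t)" if "x \<in> D" "t \<ge> 0" for x t v
  proof -
    have "pd (Some k) (lap u) x t = (\<Sum>i\<in>UNIV. ipd [Some k, Some i, Some i] u x t)" for k
      by (rule pd_lap) (rule Ck_pd[OF u_smooth], use that in auto)
    then show ?thesis
      by (simp add: M_u_def jac_def col_def c_def scaleR_sum_right sum.distrib scaleR_add_right mult.commute)
  qed
  have lipcol: "\<exists>L. \<forall>x\<in>cball p r. \<forall>x'\<in>cball p r. \<forall>t\<in>S. norm (col k x' t - col k x t) \<le> L * norm (x' - x)" for k
  proof -
    obtain L1 where L1: "\<forall>x\<in>cball p r. \<forall>x'\<in>cball p r. \<forall>t\<in>S. norm (ipd [Some k] u x' t - ipd [Some k] u x t) \<le> L1 * norm (x' - x)"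
      using lipu[of "[Some k]"] by auto
    have "\<forall>i. \<exists>L. \<forall>x\<in>cball p r. \<forall>x'\<in>cball p r. \<forall>t\<in>S. norm (ipd [Some k, Some i, Some i] u x' t - ipd [Some k, Some i, Some i] u x t) \<le> L * norm (x' - x)"
    proof
      fix i show "\<exists>L. \<forall>x\<in>cball p r. \<forall>x'\<in>cball p r. \<forall>t\<in>S. norm (ipd [Some k, Some i, Some i] u x' t - ipd [Some k, Some i, Some i] u x t) \<le> L * norm (x' - x)"
        by (rule lipu) simp
    qed
    then obtain L2 where L2: "\<And>i. \<forall>x\<in>cball p r. \<forall>x'\<in>cball p r. \<forall>t\<in>S. norm (ipd [Some k, Some i, Some i] u x' t - ipd [Some k, Some i, Some i] u x t) \<le> L2 i * norm (x' - x)"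
      by metis
    show ?thesis
    proof (intro exI ballI)
      fix x x' t assume x: "x \<in> cball p r" and x': "x' \<in> cball p r" and t: "t \<in> S"
      have e: "col k x' t - col k x t = (ipd [Some k] u x' t - ipd [Some k] u x t) + c *\<^sub>R (\<Sum>i\<in>UNIV. ipd [Some k, Some i, Some i] u x' t - ipd [Some k, Some i, Some i] u x t)"
        by (simp add: col_def sum_subtractf algebra_simps)
      have "norm (\<Sum>i\<in>UNIV. ipd [Some k, Some i, Some i] u x' t - ipd [Some k, Some i, Some i] u x t) \<le> (\<Sum>i\<in>UNIV. L2 i * norm (x' - x))"
      proof (rule order_trans[OF norm_sum sum_mono])
        fix i show "norm (ipd [Some k, Some i, Some i] u x' t - ipd [Some k, Some i, Some i] u x t) \<le> L2 i * norm (x' - x)"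
          using L2[of i] x x' t by blast
      qed
      also have "\<dots> = (\<Sum>i\<in>UNIV. L2 i) * norm (x' - x)" by (simp add: sum_distrib_right)
      finally have n2: "norm (\<Sum>i\<in>UNIV. ipd [Some k, Some i, Some i] u x' t - ipd [Some k, Some i, Some i] u x t) \<le> (\<Sum>i\<in>UNIV. L2 i) * norm (x' - x)" .
      have "norm (col k x' t - col k x t) \<le> norm (ipd [Some k] u x' t - ipd [Some k] u x t) + \<bar>c\<bar> * norm (\<Sum>i\<in>UNIV. ipd [Some k, Some i, Some i] u x' t - ipd [Some k, Some i, Some i] u x t)"
        unfolding e using norm_triangle_ineq[of "ipd [Some k] u x' t - ipd [Some k] u x t" "c *\<^sub>R (\<Sum>i\<in>UNIV. ipd [Some k, Some i, Some i] u x' t - ipd [Some k, Some i, Some i] u x t)"] by simp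
      also have "\<dots> \<le> L1 * norm (x' - x) + \<bar>c\<bar> * ((\<Sum>i\<in>UNIV. L2 i) * norm (x' - x))"
      proof (rule add_mono)
        show "norm (ipd [Some k] u x' t - ipd [Some k] u x t) \<le> L1 * norm (x' - x)" using L1 x x' t by blast
        show "\<bar>c\<bar> * norm (\<Sum>i\<in>UNIV. ipd [Some k, Some i, Some i] u x' t - ipd [Some k, Some i, Some i] u x t) \<le> \<bar>c\<bar> * ((\<Sum>i\<in>UNIV. L2 i) * norm (x' - x))"
          by (rule mult_left_mono[OF n2]) simp
      qed
      also have "\<dots> = (L1 + \<bar>c\<bar> * (\<Sum>i\<in>UNIV. L2 i)) * norm (x' - x)" by (simp add: algebra_simps)
      finally show "norm (col k x' t - col k x t) \<le> (L1 + \<bar>c\<bar> * (\<Sum>i\<in>UNIV. L2 i)) * norm (x' - x)" .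
    qed
  qed
  then obtain Lc where Lc: "\<And>k. \<forall>x\<in>cball p r. \<forall>x'\<in>cball p r. \<forall>t\<in>S. norm (col k x' t - col k x t) \<le> Lc k * norm (x' - x)"
    by metis
  have bcol: "\<exists>B. \<forall>z\<in>cball p R0 \<times> S. norm ((\<lambda>(x,t). col k x t) z) \<le> B" for k
  proof (rule bound_compact[OF compact_Times[OF compact_cball cS]])
    have c1: "continuous_on (cball p R0 \<times> S) (\<lambda>(x,t). ipd [Some k] u x t)" by (rule contu) simp
    have c2: "continuous_on (cball p R0 \<times> S) (\<lambda>z. (\<Sum>i\<in>UNIV. (\<lambda>(x,t). ipd [Some k, Some i, Some i] u x t) z))"
      by (intro continuous_on_sum contu) simp
    have "continuous_on (cball p R0 \<times> S) (\<lambda>z. (\<lambda>(x,t). ipd [Some k] u x t) z + c *\<^sub>R (\<Sum>i\<in>UNIV. (\<lambda>(x,t). ipd [Some k, Some i, Some i] u x t) z))"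
      by (intro continuous_on_add continuous_on_scaleR continuous_on_const c1 c2)
    then show "continuous_on (cball p R0 \<times> S) (\<lambda>(x,t). col k x t)"
      by (simp add: col_def case_prod_beta)
  qed
  then obtain Bc where Bc: "\<And>k. \<forall>z\<in>cball p R0 \<times> S. norm ((\<lambda>(x,t). col k x t) z) \<le> Bc k"
    by metis
  define CC where "CC = (\<Sum>k\<in>UNIV. \<bar>Bc k\<bar>)"
  define LL where "LL = (\<Sum>k\<in>UNIV. \<bar>Lc k\<bar>)"
  have CC0: "CC \<ge> 0" and LL0: "LL \<ge> 0" by (auto simp: CC_def LL_def intro: sum_nonneg)
  have BcC: "Bc k \<le> CC" for k
    unfolding CC_def by (rule order_trans[OF abs_ge_self[of "Bc k"] member_le_sum[of k UNIV "\<lambda>j. \<bar>Bc j\<bar>"]]) auto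
  have LcL: "\<bar>Lc k\<bar> \<le> LL" for k
    unfolding LL_def by (rule member_le_sum[of k UNIV "\<lambda>j. \<bar>Lc j\<bar>"]) auto
  have n1: "1 \<le> real CARD('n)"
    using zero_less_card_finite[where 'a='n] by linarith
  have "r \<le> real CARD('n) * r" using mult_right_mono[OF n1, of r] r0 by simp
  then have rsub: "cball p r \<subseteq> cball p R0" using rR by (intro subset_cball) simp
  show ?thesis
  proof (rule exI[of _ r], rule conjI[OF r0], rule exI[of _ "real CARD('n) * Lb"], rule exI[of _ "real CARD('n) * Lb"],
      rule exI[of _ "real CARD('n) * CC"], rule exI[of _ "real CARD('n) * LL"], intro ballI allI conjI)
    fix x x' s v v' assume x: "x \<in> cball p r" and x': "x' \<in> cball p r" and s: "s \<in> {t0..\<tau>}"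
    have sS: "s \<in> S" using s by (simp add: S_def)
    have xD: "x \<in> D" "x' \<in> D" using x x' rsub R0(2) by auto
    have s0: "s \<ge> 0" using S0 sS by blast
    show "norm (A_u u \<mu> \<gamma> x s - A_u u \<mu> \<gamma> x' s) \<le> (real CARD('n) * Lb) * norm (x - x')"
      using lip_pd[OF hA x' x rR sS] .
    show "norm (B_u u R \<mu> \<gamma> g x s - B_u u R \<mu> \<gamma> g x' s) \<le> (real CARD('n) * Lb) * norm (x - x')"
      using lip_pd[OF hB x' x rR sS] .
    have "M_u u \<mu> \<gamma> x s v - M_u u \<mu> \<gamma> x s v' = (\<Sum>k\<in>UNIV. (v - v')$k *\<^sub>R col k x s)"
      using xD s0 by (simp add: Mcol scaleR_diff_left sum_subtractf)
    moreover have "norm (\<Sum>k\<in>UNIV. (v - v')$k *\<^sub>R col k x s) \<le> real CARD('n) * CC * norm (v - v')"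
    proof (rule sum_bound_lemma[OF _ CC0])
      fix k have "(x, s) \<in> cball p R0 \<times> S" using x rsub sS by auto
      from Bc[of k, rule_format, OF this] have "norm (col k x s) \<le> Bc k" by simp
      then show "norm (col k x s) \<le> CC" using BcC[of k] by linarith
    qed
    ultimately show "norm (M_u u \<mu> \<gamma> x s v - M_u u \<mu> \<gamma> x s v') \<le> (real CARD('n) * CC) * norm (v - v')"
      by simp
    have "M_u u \<mu> \<gamma> x s v - M_u u \<mu> \<gamma> x' s v = (\<Sum>k\<in>UNIV. v$k *\<^sub>R (col k x s - col k x' s))"
      using xD s0 by (simp add: Mcol scaleR_diff_right sum_subtractf)
    moreover have "norm (\<Sum>k\<in>UNIV. v$k *\<^sub>R (col k x s - col k x' s)) \<le> real CARD('n) * (LL * norm (x - x')) * norm v"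
    proof (rule sum_bound_lemma)
      fix k
      have "norm (col k x s - col k x' s) \<le> Lc k * norm (x - x')" using Lc[of k] x x' sS by blast
      also have "\<dots> \<le> LL * norm (x - x')"
        by (rule mult_right_mono[OF order_trans[OF abs_ge_self LcL]]) simp
      finally show "norm (col k x s - col k x' s) \<le> LL * norm (x - x')" .
    qed (use LL0 in simp)
    ultimately show "norm (M_u u \<mu> \<gamma> x s v - M_u u \<mu> \<gamma> x' s v) \<le> (real CARD('n) * LL) * norm (x - x') * norm v"
      by (simp add: algebra_simps)
  qed
qed

lemma inv_sqrt_int:
  fixes c t :: real
  assumes "c \<le> t"
  shows "((\<lambda>s. 1 / sqrt (t - s)) has_integral (2 * sqrt (t - c))) {c..t}"
proof -
  have "((\<lambda>s. 1 / sqrt (t - s)) has_integral ((\<lambda>s. -2 * sqrt (t - s)) t - (\<lambda>s. -2 * sqrt (t - s)) c)) {c..t}"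
  proof (rule fundamental_theorem_of_calculus_interior_strong[where S="{}"])
    show "continuous_on {c..t} (\<lambda>s. -2 * sqrt (t - s))"
      by (intro continuous_intros)
    fix s assume s: "s \<in> {c<..<t} - {}"
    then have "t - s > 0" by simp
    have "((\<lambda>s. -2 * sqrt (t - s)) has_real_derivative (-2 * (inverse (sqrt (t - s)) / 2 * (0 - 1)))) (at s)"
    proof -
      have d1: "((\<lambda>s. t - s) has_real_derivative (0 - 1)) (at s)"
        by (intro derivative_eq_intros) auto
      have "((\<lambda>s. sqrt (t - s)) has_real_derivative (inverse (sqrt (t - s)) / 2 * (0 - 1))) (at s)"
        using DERIV_chain2[OF DERIV_real_sqrt[OF \<open>t - s > 0\<close>] d1] .
      then show ?thesis by (rule DERIV_cmult)
    qed
    moreover have "-2 * (inverse (sqrt (t - s)) / 2 * (0 - 1)) = 1 / sqrt (t - s)"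
      by (simp add: field_simps)
    ultimately show "((\<lambda>s. -2 * sqrt (t - s)) has_vector_derivative 1 / sqrt (t - s)) (at s)"
      by (simp add: has_real_derivative_iff_has_vector_derivative)
  qed (use assms in auto)
  then show ?thesis by simp
qed

lemma sing_bound:
  fixes f :: "real \<Rightarrow> 'b::banach"
  assumes I: "(f has_integral I) {lo..t}" and "lo \<le> ts" "ts \<le> t"
    and z: "\<And>s. s \<in> {lo..ts} \<Longrightarrow> f s = 0"
    and bd: "\<And>s. s \<in> {ts..t} \<Longrightarrow> norm (f s) \<le> a + b / sqrt (t - s)"
  shows "norm I \<le> a * (t - ts) + b * (2 * sqrt (t - ts))"
proof -
  have fi: "f integrable_on {lo..t}" using I by blast
  have "integral {lo..ts} f + integral {ts..t} f = integral {lo..t} f"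
    by (rule Henstock_Kurzweil_Integration.integral_combine) (use assms fi in auto)
  moreover have "integral {lo..ts} f = 0"
    using has_integral_is_0[of "{lo..ts}" f] z by (simp add: integral_unique)
  ultimately have II: "I = integral {ts..t} f" using I by (simp add: integral_unique)
  have fi2: "f integrable_on {ts..t}"
    by (rule integrable_subinterval_real[OF fi]) (use assms in auto)
  have gi: "((\<lambda>s. a + b * (1 / sqrt (t - s))) has_integral (a * (t - ts) + b * (2 * sqrt (t - ts)))) {ts..t}"
  proof -
    have "((\<lambda>s. a) has_integral ((t - ts) * a)) {ts..t}" using has_integral_const_real[of a ts t] assms by simp
    moreover have "((\<lambda>s. b * (1 / sqrt (t - s))) has_integral (b * (2 * sqrt (t - ts)))) {ts..t}"
      by (rule has_integral_mult_right[OF inv_sqrt_int]) (use assms in auto)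
    ultimately show ?thesis using assms by (auto dest: has_integral_add simp: mult.commute)
  qed
  have "norm (integral {ts..t} f) \<le> integral {ts..t} (\<lambda>s. a + b * (1 / sqrt (t - s)))"
    by (rule integral_norm_bound_integral[OF fi2]) (use gi bd in auto)
  also have "\<dots> = a * (t - ts) + b * (2 * sqrt (t - ts))" using gi by (rule integral_unique)
  finally show ?thesis using II by simp
qed

lemma five_bound:
  fixes a b c d e :: "'b::real_normed_vector"
  shows "norm (a - b - c - d + e) \<le> norm a + norm b + norm c + norm d + norm e"
proof -
  have "norm (a - b - c - d + e) \<le> norm (a - b - c - d) + norm e" by (rule norm_triangle_ineq)
  moreover have "norm (a - b - c - d) \<le> norm (a - b - c) + norm d" by (rule norm_triangle_ineq4)
  moreover have "norm (a - b - c) \<le> norm (a - b) + norm c" by (rule norm_triangle_ineq4)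
  moreover have "norm (a - b) \<le> norm a + norm b" by (rule norm_triangle_ineq4)
  ultimately show ?thesis by linarith
qed

definition sol_on :: "(real^'n::finite \<Rightarrow> real \<Rightarrow> real^'n) \<Rightarrow> (real^'n \<Rightarrow> real \<Rightarrow> real^'n) \<Rightarrow> (real^'n \<Rightarrow> real \<Rightarrow> real^'n \<Rightarrow> real^'n)
   \<Rightarrow> real \<Rightarrow> real \<Rightarrow> (real^'n) set \<Rightarrow> real \<Rightarrow> real \<Rightarrow> real^'n \<Rightarrow> real^'n \<Rightarrow> (real \<Rightarrow> real^'n) \<Rightarrow> (real \<Rightarrow> real^'n) \<Rightarrow> bool" where
  "sol_on A B M \<mu> \<kappa> D t0 \<tau> y0 w0 y w \<longleftrightarrow>
     continuous_on {t0..\<tau>} y \<and> continuous_on {t0..\<tau>} w \<and>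
     (\<forall>t\<in>{t0..\<tau>}. y t \<in> D \<and>
        ((\<lambda>s. w s + A (y s) s) has_integral (y t - y0)) {t0..t} \<and>
        ((\<lambda>s. - \<mu> *\<^sub>R w s - M (y s) s (w s)
               - (\<kappa> * sqrt \<mu> / sqrt (t - s)) *\<^sub>R w s + B (y s) s)
           has_integral (w t - w0)) {t0..t})"

lemma local_step:
  fixes A B :: "real^'n::finite \<Rightarrow> real \<Rightarrow> real^'n" and M :: "real^'n \<Rightarrow> real \<Rightarrow> real^'n \<Rightarrow> real^'n"
  assumes est: "\<forall>x\<in>cball p r. \<forall>x'\<in>cball p r. \<forall>s\<in>{t0..\<tau>}. \<forall>v v'.
     norm (A x s - A x' s) \<le> LA * norm (x - x') \<and>
     norm (B x s - B x' s) \<le> LB * norm (x - x') \<and>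
     norm (M x s v - M x s v') \<le> CM * norm (v - v') \<and>
     norm (M x s v - M x' s v) \<le> LM * norm (x - x') * norm v"
    and r: "r > 0"
    and S1: "sol_on A B M \<mu> \<kappa> D t0 \<tau> y0 w0 y1 w1"
    and S2: "sol_on A B M \<mu> \<kappa> D t0 \<tau> y0 w0 y2 w2"
    and ts: "t0 \<le> ts" "ts < \<tau>"
    and agree: "\<forall>s\<in>{t0..ts}. y1 s = y2 s \<and> w1 s = w2 s"
    and p: "p = y1 ts"
  shows "\<exists>h>0. ts + h \<le> \<tau> \<and> (\<forall>s\<in>{ts..ts+h}. y1 s = y2 s \<and> w1 s = w2 s)"
proof -
  define LA' where "LA' = \<bar>LA\<bar>"
  define LB' where "LB' = \<bar>LB\<bar>"
  define CM' where "CM' = \<bar>CM\<bar>"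
  define LM' where "LM' = \<bar>LM\<bar>"
  have nn: "LA' \<ge> 0" "LB' \<ge> 0" "CM' \<ge> 0" "LM' \<ge> 0" by (auto simp: LA'_def LB'_def CM'_def LM'_def)
  have eA: "norm (A x s - A x' s) \<le> LA' * norm (x - x')" if "x \<in> cball p r" "x' \<in> cball p r" "s \<in> {t0..\<tau>}" for x x' s
    using est that unfolding LA'_def by (meson abs_ge_self mult_right_mono norm_ge_zero order_trans)
  have eB: "norm (B x s - B x' s) \<le> LB' * norm (x - x')" if "x \<in> cball p r" "x' \<in> cball p r" "s \<in> {t0..\<tau>}" for x x' s
    using est that unfolding LB'_def by (meson abs_ge_self mult_right_mono norm_ge_zero order_trans)
  have eM1: "norm (M x s v - M x s v') \<le> CM' * norm (v - v')" if "x \<in> cball p r" "s \<in> {t0..\<tau>}" for x s v v'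
    using est that unfolding CM'_def by (meson abs_ge_self mult_right_mono norm_ge_zero order_trans)
  have eM2: "norm (M x s v - M x' s v) \<le> LM' * norm (x - x') * norm v" if "x \<in> cball p r" "x' \<in> cball p r" "s \<in> {t0..\<tau>}" for x x' s v
  proof -
    have "norm (M x s v - M x' s v) \<le> LM * norm (x - x') * norm v" using est that by blast
    also have "\<dots> \<le> LM' * norm (x - x') * norm v"
      unfolding LM'_def by (intro mult_right_mono) auto
    finally show ?thesis .
  qed
  have c1: "continuous_on {t0..\<tau>} y1" "continuous_on {t0..\<tau>} w1" and c2: "continuous_on {t0..\<tau>} y2" "continuous_on {t0..\<tau>} w2"
    using S1 S2 by (auto simp: sol_on_def)
  obtain W where W: "\<forall>s\<in>{t0..\<tau>}. norm (w2 s) \<le> W" using bound_compact[OF compact_Icc c2(2)] by blast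
  define W' where "W' = \<bar>W\<bar>"
  have W': "\<forall>s\<in>{t0..\<tau>}. norm (w2 s) \<le> W'" "W' \<ge> 0" using W by (auto simp: W'_def)
  have tsI: "ts \<in> {t0..\<tau>}" using ts by simp
  have p2: "y2 ts = p" using agree ts p by auto
  obtain d1 where d1: "d1 > 0" "\<forall>s\<in>{t0..\<tau>}. dist s ts < d1 \<longrightarrow> dist (y1 s) (y1 ts) < r"
    using c1(1) tsI r unfolding continuous_on_iff by blast
  obtain d2 where d2: "d2 > 0" "\<forall>s\<in>{t0..\<tau>}. dist s ts < d2 \<longrightarrow> dist (y2 s) (y2 ts) < r"
    using c2(1) tsI r unfolding continuous_on_iff by blast
  define K1 where "K1 = 1 + LA'"
  define K2 where "K2 = \<bar>\<mu>\<bar> + CM' + LM' * W' + LB'"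
  define K3 where "K3 = \<bar>\<kappa> * sqrt \<mu>\<bar>"
  define K where "K = K1 + K2 + 2 * K3 + 1"
  have Kn: "K1 \<ge> 0" "K2 \<ge> 0" "K3 \<ge> 0" "K > 0"
  proof -
    show k1: "K1 \<ge> 0" using nn by (simp add: K1_def)
    show k2: "K2 \<ge> 0" using nn W'(2) by (simp add: K2_def)
    show k3: "K3 \<ge> 0" by (simp add: K3_def)
    show "K > 0" using k1 k2 k3 by (simp add: K_def)
  qed
  define h where "h = min (min d1 d2 / 2) (min (\<tau> - ts) (min 1 ((1 / (2 * K))^2)))"
  have h: "h > 0" "h \<le> \<tau> - ts" "h < d1" "h < d2" "h \<le> 1" "h \<le> (1 / (2 * K))^2"
    using d1 d2 ts Kn by (auto simp: h_def)
  have sqh: "sqrt h \<le> 1 / (2 * K)"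
    using real_sqrt_le_mono[OF h(6)] Kn by simp
  have hsq: "h \<le> sqrt h"
  proof -
    have "sqrt h * sqrt h \<le> 1 * sqrt h" using h(1,5) by (intro mult_right_mono) (auto simp: real_sqrt_le_1_iff)
    then show ?thesis using h(1) by simp
  qed
  define J where "J = {ts..ts+h}"
  have JI: "J \<subseteq> {t0..\<tau>}" using ts h by (auto simp: J_def)
  have inJ: "y1 s \<in> cball p r \<and> y2 s \<in> cball p r" if "s \<in> J" for s
  proof -
    have "s \<in> {t0..\<tau>}" "dist s ts < d1" "dist s ts < d2" using that JI h by (auto simp: J_def dist_real_def)
    then show ?thesis using d1 d2 p p2 by (auto simp: dist_commute less_imp_le)
  qed
  define e where "e s = norm (y1 s - y2 s) + norm (w1 s - w2 s)" for s
  have ce: "continuous_on J e"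
    unfolding e_def
    by (intro continuous_intros continuous_on_subset[OF c1(1) JI] continuous_on_subset[OF c1(2) JI]
        continuous_on_subset[OF c2(1) JI] continuous_on_subset[OF c2(2) JI])
  obtain s0 where s0: "s0 \<in> J" "\<forall>s\<in>J. e s \<le> e s0"
    using continuous_attains_sup[OF _ _ ce] h(1) by (auto simp: J_def)
  define m where "m = e s0"
  have m0: "m \<ge> 0" by (simp add: m_def e_def)
  have dyw: "norm (y1 s - y2 s) \<le> m \<and> norm (w1 s - w2 s) \<le> m" if "s \<in> J" for s
  proof -
    have "e s \<le> m" using s0(2) that by (simp add: m_def)
    then show ?thesis using norm_ge_zero[of "w1 s - w2 s"] norm_ge_zero[of "y1 s - y2 s"]
      unfolding e_def by linarith
  qed
  have dy: "norm (y1 s - y2 s) \<le> m" and dw: "norm (w1 s - w2 s) \<le> m" if "s \<in> J" for s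
    using dyw[OF that] by auto
  have Yb: "norm (y1 t - y2 t) \<le> K1 * m * (t - ts) + 0 * (2 * sqrt (t - ts))" if t: "t \<in> J" for t
  proof (rule sing_bound[where lo=t0 and a="K1 * m" and b=0 and f="\<lambda>s. (w1 s + A (y1 s) s) - (w2 s + A (y2 s) s)"])
    have tI: "t \<in> {t0..\<tau>}" using t JI by auto
    have "((\<lambda>s. (w1 s + A (y1 s) s) - (w2 s + A (y2 s) s)) has_integral ((y1 t - y0) - (y2 t - y0))) {t0..t}"
      using S1 S2 tI by (intro has_integral_diff) (auto simp: sol_on_def)
    then show "((\<lambda>s. (w1 s + A (y1 s) s) - (w2 s + A (y2 s) s)) has_integral (y1 t - y2 t)) {t0..t}" by simp
    show "t0 \<le> ts" "ts \<le> t" using ts t by (auto simp: J_def)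
    show "(w1 s + A (y1 s) s) - (w2 s + A (y2 s) s) = 0" if "s \<in> {t0..ts}" for s
      using agree that by auto
    fix s assume s: "s \<in> {ts..t}"
    then have sJ: "s \<in> J" using t by (auto simp: J_def)
    have "norm ((w1 s + A (y1 s) s) - (w2 s + A (y2 s) s)) \<le> norm (w1 s - w2 s) + norm (A (y1 s) s - A (y2 s) s)"
      by (metis add_diff_add norm_triangle_ineq)
    also have "\<dots> \<le> m + LA' * m"
      using dw[OF sJ] eA[of "y1 s" "y2 s" s] inJ[OF sJ] JI sJ mult_left_mono[OF dy[OF sJ] nn(1)] by force
    finally show "norm ((w1 s + A (y1 s) s) - (w2 s + A (y2 s) s)) \<le> K1 * m + 0 / sqrt (t - s)"
      by (simp add: K1_def algebra_simps)
  qed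
  have Wb: "norm (w1 t - w2 t) \<le> K2 * m * (t - ts) + (K3 * m) * (2 * sqrt (t - ts))" if t: "t \<in> J" for t
  proof (rule sing_bound[where lo=t0 and a="K2 * m" and b="K3 * m" and f="\<lambda>s. (- \<mu> *\<^sub>R w1 s - M (y1 s) s (w1 s) - (\<kappa> * sqrt \<mu> / sqrt (t - s)) *\<^sub>R w1 s + B (y1 s) s) - (- \<mu> *\<^sub>R w2 s - M (y2 s) s (w2 s) - (\<kappa> * sqrt \<mu> / sqrt (t - s)) *\<^sub>R w2 s + B (y2 s) s)"])
    have tI: "t \<in> {t0..\<tau>}" using t JI by auto
    let ?F = "\<lambda>y w s. - \<mu> *\<^sub>R w s - M (y s) s (w s) - (\<kappa> * sqrt \<mu> / sqrt (t - s)) *\<^sub>R w s + B (y s) s"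
    have "((\<lambda>s. ?F y1 w1 s - ?F y2 w2 s) has_integral ((w1 t - w0) - (w2 t - w0))) {t0..t}"
      using S1 S2 tI by (intro has_integral_diff) (auto simp: sol_on_def)
    then show "((\<lambda>s. ?F y1 w1 s - ?F y2 w2 s) has_integral (w1 t - w2 t)) {t0..t}" by simp
    show "t0 \<le> ts" "ts \<le> t" using ts t by (auto simp: J_def)
    show "?F y1 w1 s - ?F y2 w2 s = 0" if "s \<in> {t0..ts}" for s
      using agree that by auto
    fix s assume s: "s \<in> {ts..t}"
    then have sJ: "s \<in> J" using t by (auto simp: J_def)
    have sI: "s \<in> {t0..\<tau>}" using sJ JI by auto
    define c where "c = \<kappa> * sqrt \<mu> / sqrt (t - s)"
    have eq: "?F y1 w1 s - ?F y2 w2 s = (-\<mu>) *\<^sub>R (w1 s - w2 s) - (M (y1 s) s (w1 s) - M (y1 s) s (w2 s))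
       - (M (y1 s) s (w2 s) - M (y2 s) s (w2 s)) - c *\<^sub>R (w1 s - w2 s) + (B (y1 s) s - B (y2 s) s)"
      by (simp add: c_def algebra_simps)
    have i1: "norm ((-\<mu>) *\<^sub>R (w1 s - w2 s)) \<le> \<bar>\<mu>\<bar> * m"
      using mult_left_mono[OF dw[OF sJ], of "\<bar>\<mu>\<bar>"] by simp
    have i2: "norm (M (y1 s) s (w1 s) - M (y1 s) s (w2 s)) \<le> CM' * m"
      using order_trans[OF eM1[of "y1 s" s "w1 s" "w2 s"] mult_left_mono[OF dw[OF sJ] nn(3)]] inJ[OF sJ] sI by blast
    have i3: "norm (M (y1 s) s (w2 s) - M (y2 s) s (w2 s)) \<le> LM' * m * W'"
    proof -
      have "norm (M (y1 s) s (w2 s) - M (y2 s) s (w2 s)) \<le> LM' * norm (y1 s - y2 s) * norm (w2 s)"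
        using eM2 inJ[OF sJ] sI by blast
      also have "\<dots> \<le> LM' * m * W'"
        using W'(1) sI dy[OF sJ] nn(4) m0 by (intro mult_mono mult_left_mono) auto
      finally show ?thesis .
    qed
    have i4: "norm (c *\<^sub>R (w1 s - w2 s)) \<le> K3 * m / sqrt (t - s)"
    proof -
      have "norm (c *\<^sub>R (w1 s - w2 s)) = \<bar>c\<bar> * norm (w1 s - w2 s)" by simp
      also have "\<dots> \<le> \<bar>c\<bar> * m" using dw[OF sJ] by (intro mult_left_mono) auto
      also have "\<bar>c\<bar> = K3 / sqrt (t - s)"
        using s by (simp add: c_def K3_def abs_divide)
      finally show ?thesis by simp
    qed
    have i5: "norm (B (y1 s) s - B (y2 s) s) \<le> LB' * m"
      using order_trans[OF eB[of "y1 s" "y2 s" s] mult_left_mono[OF dy[OF sJ] nn(2)]] inJ[OF sJ] sI by blast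
    have "norm (?F y1 w1 s - ?F y2 w2 s) \<le> \<bar>\<mu>\<bar> * m + CM' * m + LM' * m * W' + K3 * m / sqrt (t - s) + LB' * m"
      unfolding eq using five_bound[of "(-\<mu>) *\<^sub>R (w1 s - w2 s)" "M (y1 s) s (w1 s) - M (y1 s) s (w2 s)"
         "M (y1 s) s (w2 s) - M (y2 s) s (w2 s)" "c *\<^sub>R (w1 s - w2 s)" "B (y1 s) s - B (y2 s) s"] i1 i2 i3 i4 i5
      by linarith
    then show "norm (?F y1 w1 s - ?F y2 w2 s) \<le> K2 * m + K3 * m / sqrt (t - s)"
      by (simp add: K2_def algebra_simps)
  qed
  have "m \<le> K1 * m * (s0 - ts) + 0 * (2 * sqrt (s0 - ts)) + (K2 * m * (s0 - ts) + (K3 * m) * (2 * sqrt (s0 - ts)))"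
    using Yb[OF s0(1)] Wb[OF s0(1)] unfolding m_def e_def by linarith
  moreover have "s0 - ts \<le> sqrt h" "sqrt (s0 - ts) \<le> sqrt h" "s0 - ts \<ge> 0"
    using s0(1) hsq by (auto simp: J_def)
  ultimately have "m \<le> K1 * m * sqrt h + K2 * m * sqrt h + (K3 * m) * (2 * sqrt h)"
    using Kn m0 by (smt (verit) mult_left_mono mult_nonneg_nonneg)
  also have "\<dots> \<le> K * m * sqrt h"
  proof -
    have msq: "m * sqrt h \<ge> 0" using m0 h(1) by simp
    have "K1 * m * sqrt h + K2 * m * sqrt h + (K3 * m) * (2 * sqrt h) = (K1 + K2 + 2 * K3) * (m * sqrt h)"
      by (simp add: algebra_simps)
    also have "\<dots> \<le> K * (m * sqrt h)" using msq by (intro mult_right_mono) (auto simp: K_def)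
    finally show ?thesis by (simp add: mult.assoc)
  qed
  also have "\<dots> \<le> K * m * (1 / (2 * K))" using sqh Kn m0 by (intro mult_left_mono) auto
  also have "\<dots> = m / 2" using Kn by simp
  finally have "m = 0" using m0 by simp
  then have "\<forall>s\<in>J. y1 s = y2 s \<and> w1 s = w2 s"
    using dy dw by fastforce
  then show ?thesis using h unfolding J_def by (intro exI[of _ h]) auto
qed

lemma sol_init:
  assumes "sol_on A B M \<mu> \<kappa> D t0 \<tau> y0 w0 y w" "t0 \<le> \<tau>"
  shows "y t0 = y0 \<and> w t0 = w0"
proof -
  have "t0 \<in> {t0..\<tau>}" using assms by simp
  then have i1: "((\<lambda>s. w s + A (y s) s) has_integral (y t0 - y0)) {t0..t0}"
    and i2: "((\<lambda>s. - \<mu> *\<^sub>R w s - M (y s) s (w s) - (\<kappa> * sqrt \<mu> / sqrt (t0 - s)) *\<^sub>R w s + B (y s) s) has_integral (w t0 - w0)) {t0..t0}"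
    using assms(1) unfolding sol_on_def by blast+
  have i1': "((\<lambda>s. w s + A (y s) s) has_integral (y t0 - y0)) {t0}" using i1 by simp
  have i2': "((\<lambda>s. - \<mu> *\<^sub>R w s - M (y s) s (w s) - (\<kappa> * sqrt \<mu> / sqrt (t0 - s)) *\<^sub>R w s + B (y s) s) has_integral (w t0 - w0)) {t0}"
    using i2 by simp
  have "y t0 - y0 = 0" by (rule has_integral_unique[OF i1' has_integral_refl(2)])
  moreover have "w t0 - w0 = 0" by (rule has_integral_unique[OF i2' has_integral_refl(2)])
  ultimately show ?thesis by simp
qed

lemma uniq:
  fixes A B :: "real^'n::finite \<Rightarrow> real \<Rightarrow> real^'n" and M :: "real^'n \<Rightarrow> real \<Rightarrow> real^'n \<Rightarrow> real^'n"
  assumes est: "\<And>p. p \<in> D \<Longrightarrow> \<exists>r>0. \<exists>LA LB CM LM. \<forall>x\<in>cball p r. \<forall>x'\<in>cball p r. \<forall>s\<in>{t0..\<tau>}. \<forall>v v'.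
     norm (A x s - A x' s) \<le> LA * norm (x - x') \<and>
     norm (B x s - B x' s) \<le> LB * norm (x - x') \<and>
     norm (M x s v - M x s v') \<le> CM * norm (v - v') \<and>
     norm (M x s v - M x' s v) \<le> LM * norm (x - x') * norm v"
    and S1: "sol_on A B M \<mu> \<kappa> D t0 \<tau> y0 w0 y1 w1"
    and S2: "sol_on A B M \<mu> \<kappa> D t0 \<tau> y0 w0 y2 w2"
    and t0: "t0 \<le> \<tau>"
  shows "\<forall>t\<in>{t0..\<tau>}. y1 t = y2 t \<and> w1 t = w2 t"
proof -
  define Z where "Z = {t\<in>{t0..\<tau>}. \<forall>s\<in>{t0..t}. y1 s = y2 s \<and> w1 s = w2 s}"
  have init: "y1 t0 = y2 t0 \<and> w1 t0 = w2 t0" using sol_init[OF S1 t0] sol_init[OF S2 t0] by simp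
  have t0Z: "t0 \<in> Z" using init t0 by (auto simp: Z_def)
  have bdd: "bdd_above Z" by (auto simp: Z_def bdd_above_def)
  define ts where "ts = Sup Z"
  have ts1: "t0 \<le> ts" using cSup_upper[OF t0Z bdd] by (simp add: ts_def)
  have ts2: "ts \<le> \<tau>" using t0Z by (auto simp: ts_def Z_def intro!: cSup_least)
  have lt: "y1 s = y2 s \<and> w1 s = w2 s" if ss: "t0 \<le> s" "s < ts" for s
  proof -
    have "Z \<noteq> {}" using t0Z by auto
    then obtain z where "z \<in> Z" "s < z" using less_cSupD[of Z s] ss unfolding ts_def by blast
    then show ?thesis using ss by (auto simp: Z_def)
  qed
  define G where "G = {s\<in>{t0..\<tau>}. (\<lambda>s. (y1 s - y2 s, w1 s - w2 s)) s = 0}"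
  have cG: "closed G"
  proof -
    have c: "continuous_on {t0..\<tau>} (\<lambda>s. (y1 s - y2 s, w1 s - w2 s))"
      using S1 S2 unfolding sol_on_def by (intro continuous_intros) auto
    show ?thesis unfolding G_def
      by (rule closedin_closed_trans[OF continuous_closedin_preimage_constant[OF c]]) simp
  qed
  have "ts \<in> G"
  proof (cases "t0 < ts")
    case True
    have "{t0..<ts} \<subseteq> G" using lt ts2 by (auto simp: G_def zero_prod_def)
    then have "closure {t0..<ts} \<subseteq> G" using cG by (rule closure_minimal)
    then show ?thesis using True by auto
  next
    case False
    then have "ts = t0" using ts1 by simp
    then show ?thesis using init t0 by (simp add: G_def zero_prod_def)
  qed
  then have agree: "\<forall>s\<in>{t0..ts}. y1 s = y2 s \<and> w1 s = w2 s"
    using lt by (auto simp: G_def zero_prod_def) (metis antisym_conv2)+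
  have "ts = \<tau>"
  proof (rule ccontr)
    assume "ts \<noteq> \<tau>"
    then have tsl: "ts < \<tau>" using ts2 by simp
    have "y1 ts \<in> D" using S1 ts1 ts2 by (auto simp: sol_on_def)
    then obtain r LA LB CM LM where r: "r > 0" and e: "\<forall>x\<in>cball (y1 ts) r. \<forall>x'\<in>cball (y1 ts) r. \<forall>s\<in>{t0..\<tau>}. \<forall>v v'.
     norm (A x s - A x' s) \<le> LA * norm (x - x') \<and>
     norm (B x s - B x' s) \<le> LB * norm (x - x') \<and>
     norm (M x s v - M x s v') \<le> CM * norm (v - v') \<and>
     norm (M x s v - M x' s v) \<le> LM * norm (x - x') * norm v"
      using est by blast
    obtain h where h: "h > 0" "ts + h \<le> \<tau>" "\<forall>s\<in>{ts..ts+h}. y1 s = y2 s \<and> w1 s = w2 s"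
      using local_step[OF e r S1 S2 ts1 tsl agree refl] by blast
    have "ts + h \<in> Z"
      unfolding Z_def using h agree ts1 by auto
    then have "ts + h \<le> ts" unfolding ts_def by (rule cSup_upper[OF _ bdd])
    then show False using h by simp
  qed
  then show ?thesis using agree by simp
qed

lemma MR_sol_on:
  assumes "MR_solution u R \<mu> \<kappa> \<gamma> g D t0 T y0 w0 y w" "ereal \<tau> < T"
  shows "sol_on (A_u u \<mu> \<gamma>) (B_u u R \<mu> \<gamma> g) (M_u u \<mu> \<gamma>) \<mu> \<kappa> D t0 \<tau> y0 w0 y w"
proof -
  have sub: "{t0..\<tau>} \<subseteq> {t. t0 \<le> t \<and> ereal t < T}"
    using assms(2) by auto (meson ereal_less_eq(3) le_less_trans)
  show ?thesis
    using assms(1) sub unfolding MR_solution_def sol_on_def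
    by (auto intro: continuous_on_subset)
qed

theorem lemma3p3:
  fixes u :: "real^'n \<Rightarrow> real \<Rightarrow> real^'n"
    and D :: "(real^'n) set"
    and R \<mu> \<kappa> \<gamma> t0 :: real
    and g y0 w0 :: "real^'n"
    and I :: "'a set"
    and Ta :: "'a \<Rightarrow> ereal"
    and ya wa :: "'a \<Rightarrow> real \<Rightarrow> real^'n"
    and T :: ereal
  assumes D_domain: "open D" "connected D"
    and t0: "t0 \<ge> 0"
    and pos: "R > 0" "\<mu> > 0" "\<kappa> > 0" "\<gamma> > 0"
    and u_smooth: "Ck_on 4 (D \<times> {0..}) u"
    and star: "\<exists>Lb. \<forall>x\<in>D. \<forall>t\<ge>t0. \<forall>d.
        has_pd d (A_u u \<mu> \<gamma>) x t \<and> has_pd d (B_u u R \<mu> \<gamma> g) x t \<and>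
        norm (pd d (A_u u \<mu> \<gamma>) x t) < Lb \<and> norm (pd d (B_u u R \<mu> \<gamma> g) x t) < Lb"
    and star_cont: "\<forall>d. continuous_on (D \<times> {t0..}) (\<lambda>(x,t). pd d (A_u u \<mu> \<gamma>) x t)
                      \<and> continuous_on (D \<times> {t0..}) (\<lambda>(x,t). pd d (B_u u R \<mu> \<gamma> g) x t)"
    and y0: "y0 \<in> D"
    and I_ne: "I \<noteq> {}"
    and sols: "\<forall>\<alpha>\<in>I. MR_solution u R \<mu> \<kappa> \<gamma> g D t0 (Ta \<alpha>) y0 w0 (ya \<alpha>) (wa \<alpha>)"
    and T: "{t. t0 \<le> t \<and> ereal t < T} = (\<Union>\<alpha>\<in>I. {t. t0 \<le> t \<and> ereal t < Ta \<alpha>})"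
  shows "\<exists>y w. (\<forall>\<alpha>\<in>I. \<forall>t. t0 \<le> t \<and> ereal t < Ta \<alpha> \<longrightarrow> y t = ya \<alpha> t \<and> w t = wa \<alpha> t)
            \<and> MR_solution u R \<mu> \<kappa> \<gamma> g D t0 T y0 w0 y w"
proof -
  have pairwise: "ya \<alpha> t = ya \<beta> t \<and> wa \<alpha> t = wa \<beta> t"
    if ab: "\<alpha> \<in> I" "\<beta> \<in> I" and t: "t0 \<le> t" "ereal t < Ta \<alpha>" "ereal t < Ta \<beta>" for \<alpha> \<beta> t
  proof -
    have est: "\<exists>r>0. \<exists>LA LB CM LM. \<forall>x\<in>cball p r. \<forall>x'\<in>cball p r. \<forall>s\<in>{t0..t}. \<forall>v v'.
        norm (A_u u \<mu> \<gamma> x s - A_u u \<mu> \<gamma> x' s) \<le> LA * norm (x - x') \<and>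
        norm (B_u u R \<mu> \<gamma> g x s - B_u u R \<mu> \<gamma> g x' s) \<le> LB * norm (x - x') \<and>
        norm (M_u u \<mu> \<gamma> x s v - M_u u \<mu> \<gamma> x s v') \<le> CM * norm (v - v') \<and>
        norm (M_u u \<mu> \<gamma> x s v - M_u u \<mu> \<gamma> x' s v) \<le> LM * norm (x - x') * norm v" if "p \<in> D" for p
      by (rule local_est[OF D_domain(1) t0 u_smooth star that])
    have S1: "sol_on (A_u u \<mu> \<gamma>) (B_u u R \<mu> \<gamma> g) (M_u u \<mu> \<gamma>) \<mu> \<kappa> D t0 t y0 w0 (ya \<alpha>) (wa \<alpha>)"
      using MR_sol_on sols ab t by blast
    have S2: "sol_on (A_u u \<mu> \<gamma>) (B_u u R \<mu> \<gamma> g) (M_u u \<mu> \<gamma>) \<mu> \<kappa> D t0 t y0 w0 (ya \<beta>) (wa \<beta>)"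
      using MR_sol_on sols ab t by blast
    have "\<forall>s\<in>{t0..t}. ya \<alpha> s = ya \<beta> s \<and> wa \<alpha> s = wa \<beta> s"
      by (rule uniq[OF est S1 S2 t(1)])
    then show ?thesis using t by auto
  qed
  define sel where "sel t = (SOME \<alpha>. \<alpha> \<in> I \<and> ereal t < Ta \<alpha>)" for t
  define y where "y t = ya (sel t) t" for t
  define w where "w t = wa (sel t) t" for t
  have sel: "sel t \<in> I \<and> ereal t < Ta (sel t)" if "\<alpha> \<in> I" "ereal t < Ta \<alpha>" for \<alpha> t
    unfolding sel_def by (rule someI[of "\<lambda>\<alpha>. \<alpha> \<in> I \<and> ereal t < Ta \<alpha>" \<alpha>]) (use that in simp)
  have yw: "y t = ya \<alpha> t \<and> w t = wa \<alpha> t" if "\<alpha> \<in> I" "t0 \<le> t" "ereal t < Ta \<alpha>" for \<alpha> t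
    using pairwise[of "sel t" \<alpha> t] sel[OF that(1,3)] that unfolding y_def w_def by auto
  define Dom where "Dom = {t. t0 \<le> t \<and> ereal t < T}"
  have inDom: "\<exists>\<alpha>\<in>I. ereal t < Ta \<alpha>" if "t \<in> Dom" for t
    using that T unfolding Dom_def by blast
  have DomA: "{t. t0 \<le> t \<and> ereal t < Ta \<alpha>} \<subseteq> Dom" if "\<alpha> \<in> I" for \<alpha>
    using T that unfolding Dom_def by blast
  have "MR_solution u R \<mu> \<kappa> \<gamma> g D t0 T y0 w0 y w"
    unfolding MR_solution_def
  proof (intro conjI allI impI)
    obtain \<alpha> where a: "\<alpha> \<in> I" using I_ne by blast
    then have "ereal t0 < Ta \<alpha>" using sols by (simp add: MR_solution_def)
    then have "t0 \<in> Dom" using DomA[OF a] by auto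
    then show "ereal t0 < T" by (simp add: Dom_def)
  next
    have cont: "continuous (at t within Dom) y \<and> continuous (at t within Dom) w" if t: "t \<in> Dom" for t
    proof -
      obtain \<alpha> where a: "\<alpha> \<in> I" "ereal t < Ta \<alpha>" using inDom[OF t] by blast
      define Da where "Da = {t. t0 \<le> t \<and> ereal t < Ta \<alpha>}"
      define U where "U = {s. ereal s < Ta \<alpha>}"
      have oU: "open U" unfolding U_def
        by (rule open_Collect_less) (auto intro: continuous_intros)
      have tU: "t \<in> U" using a by (simp add: U_def)
      have tDa: "t \<in> Da" using a t by (simp add: Da_def Dom_def)
      have eqat: "at t within Dom = at t within Da"
        by (rule at_within_nhd[OF tU oU]) (use DomA[OF a(1)] in \<open>auto simp: Da_def U_def Dom_def\<close>)
      have ms: "MR_solution u R \<mu> \<kappa> \<gamma> g D t0 (Ta \<alpha>) y0 w0 (ya \<alpha>) (wa \<alpha>)" using sols a by blast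
      have cy: "continuous_on Da y"
        using continuous_on_eq[of Da "ya \<alpha>" y] ms yw[OF a(1)] unfolding MR_solution_def Da_def by auto
      have cw: "continuous_on Da w"
        using continuous_on_eq[of Da "wa \<alpha>" w] ms yw[OF a(1)] unfolding MR_solution_def Da_def by auto
      show ?thesis using cy cw tDa eqat
        by (simp add: continuous_on_eq_continuous_within)
    qed
    show "continuous_on {t. t0 \<le> t \<and> ereal t < T} y"
      using cont unfolding Dom_def[symmetric] by (simp add: continuous_on_eq_continuous_within)
    show "continuous_on {t. t0 \<le> t \<and> ereal t < T} w"
      using cont unfolding Dom_def[symmetric] by (simp add: continuous_on_eq_continuous_within)
  next
    fix t assume t: "t0 \<le> t \<and> ereal t < T"
    then obtain \<alpha> where a: "\<alpha> \<in> I" "ereal t < Ta \<alpha>" using inDom[of t] by (auto simp: Dom_def)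
    have ms: "MR_solution u R \<mu> \<kappa> \<gamma> g D t0 (Ta \<alpha>) y0 w0 (ya \<alpha>) (wa \<alpha>)" using sols a by blast
    have sub: "s \<in> {t0..t} \<Longrightarrow> y s = ya \<alpha> s \<and> w s = wa \<alpha> s" for s
    proof -
      assume s: "s \<in> {t0..t}"
      then have "ereal s \<le> ereal t" by simp
      then have "ereal s < Ta \<alpha>" using a(2) by (rule le_less_trans)
      then show ?thesis using yw[OF a(1), of s] s by simp
    qed
    have props: "ya \<alpha> t \<in> D \<and>
        ((\<lambda>s. wa \<alpha> s + A_u u \<mu> \<gamma> (ya \<alpha> s) s) has_integral (ya \<alpha> t - y0)) {t0..t} \<and>
        ((\<lambda>s. - \<mu> *\<^sub>R wa \<alpha> s - M_u u \<mu> \<gamma> (ya \<alpha> s) s (wa \<alpha> s)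
               - (\<kappa> * sqrt \<mu> / sqrt (t - s)) *\<^sub>R wa \<alpha> s + B_u u R \<mu> \<gamma> g (ya \<alpha> s) s)
           has_integral (wa \<alpha> t - w0)) {t0..t}"
      using ms t a(2) unfolding MR_solution_def by blast
    have tt: "y t = ya \<alpha> t" "w t = wa \<alpha> t" using sub[of t] t by auto
    show "y t \<in> D" using props tt by simp
    show "((\<lambda>s. w s + A_u u \<mu> \<gamma> (y s) s) has_integral (y t - y0)) {t0..t}"
      using props tt has_integral_cong[of "{t0..t}" "\<lambda>s. w s + A_u u \<mu> \<gamma> (y s) s" "\<lambda>s. wa \<alpha> s + A_u u \<mu> \<gamma> (ya \<alpha> s) s"] sub
      by simp
    show "((\<lambda>s. - \<mu> *\<^sub>R w s - M_u u \<mu> \<gamma> (y s) s (w s)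
               - (\<kappa> * sqrt \<mu> / sqrt (t - s)) *\<^sub>R w s + B_u u R \<mu> \<gamma> g (y s) s)
           has_integral (w t - w0)) {t0..t}"
      using props tt has_integral_cong[of "{t0..t}" "\<lambda>s. - \<mu> *\<^sub>R w s - M_u u \<mu> \<gamma> (y s) s (w s)
               - (\<kappa> * sqrt \<mu> / sqrt (t - s)) *\<^sub>R w s + B_u u R \<mu> \<gamma> g (y s) s" "\<lambda>s. - \<mu> *\<^sub>R wa \<alpha> s - M_u u \<mu> \<gamma> (ya \<alpha> s) s (wa \<alpha> s)
               - (\<kappa> * sqrt \<mu> / sqrt (t - s)) *\<^sub>R wa \<alpha> s + B_u u R \<mu> \<gamma> g (ya \<alpha> s) s"] sub
      by simp
  qed
  then show ?thesis using yw by blast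
qed

end
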